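(* Let $I\subseteq\mathbb{R}_+$ be a nonempty interval containing $0$ and let $f\colon I^n\to\mathbb{R}$. The following are equivalent: (i) $f$ is comonotonically modular; (ii) $f$ is invariant under horizontal min-differences; (iii) there exists $g\colon I^n\to\mathbb{R}$ such that for every $\sigma\in S_n$ and every $\mathbf{x}\in I^n_\sigma$, $$f(\mathbf{x})=g(\mathbf{0})+\sum_{i\in[n]}\Big(g\big(x_{\sigma(i)}\mathbf{1}_{A^\uparrow_\sigma(i)}\big)-g\big(x_{\sigma(i)}\mathbf{1}_{A^\uparrow_\sigma(i+1)}\big)\Big).$$ Moreover, in this case one can take $g=f$ in (iii).
   Context: Notation: $[n]=\{1,\ldots,n\}$; $S_n$ is the set of permutations of $[n]$; $\mathbf{1}_A$ is the indicator tuple of $A\subseteq[n]$, $\mathbf{0}=\mathbf{1}_\varnothing$. For $\sigma\in S_n$, $\mathbb{R}^n_\sigma=\{\mathbf{x}: x_{\sigma(1)}\leq\cdots\leq x_{\sigma(n)}\}$, $I^n_\sigma=I^n\cap\mathbb{R}^n_\sigma$, $A^\uparrow_\sigma(i)=\{\sigma(i),\ldots,\sigma(n)\}$, $A^\uparrow_\sigma(n+1)=\varnothing$. $\wedge,\vee$ denote componentwise min and max; $\mathbf{x}\wedge c$ is the tuple with components $\min(x_i,c)$. Two tuples $\mathbf{x},\mathbf{x}'\in I^n$ are comonotonic if $\mathbf{x},\mathbf{x}'\in I^n_\sigma$ for some $\sigma\in S_n$. A function $f\colon I^n\to\mathbb{R}$ is comonotonically modular if $f(\mathbf{x})+f(\mathbf{x}')=f(\mathbf{x}\wedge\mathbf{x}')+f(\mathbf{x}\vee\mathbf{x}')$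 for all comonotonic $\mathbf{x},\mathbf{x}'\in I^n$. For $c\geq 0$, $[\mathbf{x}]_c$ is the tuple whose $i$th component is $0$ if $x_i\leq c$ and $x_i$ otherwise. For $I\subseteq\mathbb{R}_+$, $f$ is invariant under horizontal min-differences if $f(\mathbf{x})-f(\mathbf{x}\wedge c)=f([\mathbf{x}]_c)-f([\mathbf{x}]_c\wedge c)$ for all $\mathbf{x}\in I^n$, $c\in I$. *)

theory Defs
  imports "HOL-Analysis.Analysis" "HOL-Combinatorics.Permutations"
begin

definition tuples :: "nat \<Rightarrow> real set \<Rightarrow> (nat \<Rightarrow> real) set" where
  "tuples n I = PiE {1..n} (\<lambda>_. I)"

definition tuples_sigma :: "nat \<Rightarrow> real set \<Rightarrow> (nat \<Rightarrow> nat) \<Rightarrow> (nat \<Rightarrow> real) set" where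
  "tuples_sigma n I \<sigma> = {x \<in> tuples n I. \<forall>i\<in>{1..<n}. x (\<sigma> i) \<le> x (\<sigma> (Suc i))}"

definition cmin :: "nat \<Rightarrow> (nat \<Rightarrow> real) \<Rightarrow> (nat \<Rightarrow> real) \<Rightarrow> (nat \<Rightarrow> real)" where
  "cmin n x y = restrict (\<lambda>i. min (x i) (y i)) {1..n}"

definition cmax :: "nat \<Rightarrow> (nat \<Rightarrow> real) \<Rightarrow> (nat \<Rightarrow> real) \<Rightarrow> (nat \<Rightarrow> real)" where
  "cmax n x y = restrict (\<lambda>i. max (x i) (y i)) {1..n}"

definition cminc :: "nat \<Rightarrow> (nat \<Rightarrow> real) \<Rightarrow> real \<Rightarrow> (nat \<Rightarrow> real)" where
  "cminc n x c = restrict (\<lambda>i. min (x i) c) {1..n}"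

definition cutc :: "nat \<Rightarrow> real \<Rightarrow> (nat \<Rightarrow> real) \<Rightarrow> (nat \<Rightarrow> real)" where
  "cutc n c x = restrict (\<lambda>i. if x i \<le> c then 0 else x i) {1..n}"

definition scal_ind :: "nat \<Rightarrow> real \<Rightarrow> nat set \<Rightarrow> (nat \<Rightarrow> real)" where
  "scal_ind n c A = restrict (\<lambda>i. if i \<in> A then c else 0) {1..n}"

definition Aup :: "nat \<Rightarrow> (nat \<Rightarrow> nat) \<Rightarrow> nat \<Rightarrow> nat set" where
  "Aup n \<sigma> i = \<sigma> ` {i..n}"

definition comonotonic :: "nat \<Rightarrow> real set \<Rightarrow> (nat \<Rightarrow> real) \<Rightarrow> (nat \<Rightarrow> real) \<Rightarrow> bool" where
  "comonotonic n I x y \<longleftrightarrow>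
     (\<exists>\<sigma>. \<sigma> permutes {1..n} \<and> x \<in> tuples_sigma n I \<sigma> \<and> y \<in> tuples_sigma n I \<sigma>)"

definition comon_modular :: "nat \<Rightarrow> real set \<Rightarrow> ((nat \<Rightarrow> real) \<Rightarrow> real) \<Rightarrow> bool" where
  "comon_modular n I f \<longleftrightarrow>
     (\<forall>x\<in>tuples n I. \<forall>y\<in>tuples n I. comonotonic n I x y \<longrightarrow>
        f x + f y = f (cmin n x y) + f (cmax n x y))"

definition horiz_min_inv :: "nat \<Rightarrow> real set \<Rightarrow> ((nat \<Rightarrow> real) \<Rightarrow> real) \<Rightarrow> bool" where
  "horiz_min_inv n I f \<longleftrightarrow>
     (\<forall>x\<in>tuples n I. \<forall>c\<in>I.
        f x - f (cminc n x c) = f (cutc n c x) - f (cminc n (cutc n c x) c))"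

definition rep_by :: "nat \<Rightarrow> real set \<Rightarrow> ((nat \<Rightarrow> real) \<Rightarrow> real) \<Rightarrow> ((nat \<Rightarrow> real) \<Rightarrow> real) \<Rightarrow> bool" where
  "rep_by n I f g \<longleftrightarrow>
     (\<forall>\<sigma>. \<sigma> permutes {1..n} \<longrightarrow> (\<forall>x\<in>tuples_sigma n I \<sigma>.
        f x = g (scal_ind n 0 {}) +
          (\<Sum>i\<in>{1..n}. g (scal_ind n (x (\<sigma> i)) (Aup n \<sigma> i))
                       - g (scal_ind n (x (\<sigma> i)) (Aup n \<sigma> (Suc i))))))"

end

theory Submission
  imports Defs
begin

lemma tuples_iff: "x \<in> tuples n I \<longleftrightarrow> (\<forall>i\<in>{1..n}. x i \<in> I) \<and> (\<forall>i. i \<notin> {1..n} \<longrightarrow> x i = undefined)"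
  unfolding tuples_def PiE_iff extensional_def by auto

lemma perm_mem:
  assumes "\<sigma> permutes {1..n}" "i \<in> {1..n}"
  shows "\<sigma> i \<in> Aup n \<sigma> k \<longleftrightarrow> k \<le> i"
  using assms permutes_inj[OF assms(1)] unfolding Aup_def by (auto simp: inj_image_mem_iff)

lemma perm_surj:
  assumes "\<sigma> permutes S" "j \<in> S"
  obtains i where "i \<in> S" "\<sigma> i = j"
  using permutes_image[OF assms(1)] assms(2) by (metis imageE)

lemma sorted_sigma0:
  assumes "x \<in> tuples_sigma n I \<sigma>" "1 \<le> i"
  shows "i + d \<le> n \<Longrightarrow> x (\<sigma> i) \<le> x (\<sigma> (i+d))"
proof (induction d)
  case 0 show ?case by simp
next
  case (Suc d)
  then have "x (\<sigma> i) \<le> x (\<sigma> (i+d))" by simp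
  moreover have "x (\<sigma> (i+d)) \<le> x (\<sigma> (Suc (i+d)))"
    using assms Suc.prems unfolding tuples_sigma_def by auto
  ultimately show ?case by simp
qed

lemma sorted_sigma:
  assumes "x \<in> tuples_sigma n I \<sigma>" "1 \<le> i" "i \<le> j" "j \<le> n"
  shows "x (\<sigma> i) \<le> x (\<sigma> j)"
  using sorted_sigma0[OF assms(1,2), of "j - i"] assms by simp

lemma sort_exists:
  assumes "x \<in> tuples n I"
  shows "\<exists>\<sigma>. \<sigma> permutes {1..n} \<and> x \<in> tuples_sigma n I \<sigma>"
proof -
  define xs where "xs = sort_key x [1..<Suc n]"
  have ms: "mset xs = mset [1..<Suc n]" by (simp add: xs_def)
  have set: "set xs = {1..n}" using arg_cong[OF ms, of set_mset] by auto
  have len: "length xs = n" by (simp add: xs_def)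
  have dist: "distinct xs" by (simp add: xs_def)
  have srt: "sorted (map x xs)" by (simp add: xs_def)
  define \<sigma> where "\<sigma> i = (if i \<in> {1..n} then xs!(i-1) else i)" for i
  have inj: "inj_on \<sigma> {1..n}"
  proof (rule inj_onI)
    fix i j assume "i \<in> {1..n}" "j \<in> {1..n}" "\<sigma> i = \<sigma> j"
    then have "xs!(i-1) = xs!(j-1)" "i - 1 < length xs" "j - 1 < length xs" by (auto simp: \<sigma>_def len)
    then have "i - 1 = j - 1" using nth_eq_iff_index_eq[OF dist] by blast
    then show "i = j" using \<open>i \<in> {1..n}\<close> \<open>j \<in> {1..n}\<close> by auto
  qed
  have img: "\<sigma> ` {1..n} = {1..n}"
  proof
    show "\<sigma> ` {1..n} \<subseteq> {1..n}"
    proof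
      fix y assume "y \<in> \<sigma> ` {1..n}"
      then obtain i where i: "i \<in> {1..n}" "y = xs!(i-1)" by (auto simp: \<sigma>_def)
      then have "i - 1 < length xs" using len by auto
      then show "y \<in> {1..n}" using i set nth_mem by metis
    qed
    show "{1..n} \<subseteq> \<sigma> ` {1..n}"
    proof
      fix j assume "j \<in> {1..n}"
      then obtain k where k: "k < length xs" "xs!k = j" using set by (metis in_set_conv_nth)
      then have "Suc k \<in> {1..n}" "\<sigma> (Suc k) = j" using len by (auto simp: \<sigma>_def)
      then show "j \<in> \<sigma> ` {1..n}" by blast
    qed
  qed
  have perm: "\<sigma> permutes {1..n}"
  proof (rule bij_imp_permutes)
    show "bij_betw \<sigma> {1..n} {1..n}" using inj img by (simp add: bij_betw_def)
  qed (auto simp add: \<sigma>_def)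
  have "x \<in> tuples_sigma n I \<sigma>"
    unfolding tuples_sigma_def
  proof (intro CollectI conjI ballI assms)
    fix i assume i: "i \<in> {1..<n}"
    then have "(map x xs)!(i-1) \<le> (map x xs)!i" using sorted_nth_mono[OF srt, of "i-1" i] len by auto
    then show "x (\<sigma> i) \<le> x (\<sigma> (Suc i))" using i len by (auto simp: \<sigma>_def)
  qed
  then show ?thesis using perm by blast
qed

definition zpart :: "nat \<Rightarrow> (nat \<Rightarrow> nat) \<Rightarrow> (nat \<Rightarrow> real) \<Rightarrow> nat \<Rightarrow> (nat \<Rightarrow> real)" where
  "zpart n \<sigma> x k = restrict (\<lambda>j. if j \<in> Aup n \<sigma> k then x j else 0) {1..n}"

lemma perm_in1: "\<sigma> permutes {1..n} \<Longrightarrow> i \<in> {1..n} \<Longrightarrow> \<sigma> i \<in> {1..n}"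
  by (rule permutes_in_image[THEN iffD2])

lemma ext_sigma:
  assumes perm: "\<sigma> permutes {1..n}"
    and out: "\<And>j. j \<notin> {1..n} \<Longrightarrow> u j = v j"
    and inn: "\<And>i. i \<in> {1..n} \<Longrightarrow> u (\<sigma> i) = v (\<sigma> i)"
  shows "u = v"
proof
  fix j show "u j = v j"
  proof (cases "j \<in> {1..n}")
    case True
    then obtain i where "i \<in> {1..n}" "\<sigma> i = j" using perm_surj[OF perm] by blast
    then show ?thesis using inn by blast
  qed (use out in blast)
qed

lemma tuples_sigma_intro:
  assumes perm: "\<sigma> permutes {1..n}"
    and ext: "\<And>j. j \<notin> {1..n} \<Longrightarrow> y j = undefined"
    and val: "\<And>i. i \<in> {1..n} \<Longrightarrow> y (\<sigma> i) \<in> I"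
    and mono: "\<And>i. i \<in> {1..<n} \<Longrightarrow> y (\<sigma> i) \<le> y (\<sigma> (Suc i))"
  shows "y \<in> tuples_sigma n I \<sigma>"
proof -
  have "\<forall>j\<in>{1..n}. y j \<in> I"
  proof
    fix j assume "j \<in> {1..n}"
    then obtain i where "i \<in> {1..n}" "\<sigma> i = j" using perm_surj[OF perm] by blast
    then show "y j \<in> I" using val by blast
  qed
  then show ?thesis using ext mono unfolding tuples_sigma_def tuples_iff by blast
qed

lemma ts_tuples: "x \<in> tuples_sigma n I \<sigma> \<Longrightarrow> x \<in> tuples n I"
  unfolding tuples_sigma_def by blast

lemma ts_val: "x \<in> tuples_sigma n I \<sigma> \<Longrightarrow> \<sigma> permutes {1..n} \<Longrightarrow> i \<in> {1..n} \<Longrightarrow> x (\<sigma> i) \<in> I"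
  using perm_in1 unfolding tuples_sigma_def tuples_iff by blast

lemma ts_ext: "x \<in> tuples_sigma n I \<sigma> \<Longrightarrow> j \<notin> {1..n} \<Longrightarrow> x j = undefined"
  unfolding tuples_sigma_def tuples_iff by blast

lemma ts_mono: "x \<in> tuples_sigma n I \<sigma> \<Longrightarrow> i \<in> {1..<n} \<Longrightarrow> x (\<sigma> i) \<le> x (\<sigma> (Suc i))"
  unfolding tuples_sigma_def by blast

lemma zpart_ts:
  assumes perm: "\<sigma> permutes {1..n}" and x: "x \<in> tuples_sigma n I \<sigma>"
    and nn: "I \<subseteq> {0..}" and I0: "0 \<in> I"
  shows "zpart n \<sigma> x k \<in> tuples_sigma n I \<sigma>"
proof (rule tuples_sigma_intro[OF perm])
  fix i assume i: "i \<in> {1..n}"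
  show "zpart n \<sigma> x k (\<sigma> i) \<in> I"
    using i perm_in1[OF perm i] ts_val[OF x perm i] I0 by (simp add: zpart_def)
next
  fix i assume i: "i \<in> {1..<n}"
  have i1: "i \<in> {1..n}" "Suc i \<in> {1..n}" using i by auto
  have "x (\<sigma> (Suc i)) \<ge> 0" using ts_val[OF x perm i1(2)] nn by auto
  moreover have "x (\<sigma> i) \<le> x (\<sigma> (Suc i))" using ts_mono[OF x i] .
  ultimately show "zpart n \<sigma> x k (\<sigma> i) \<le> zpart n \<sigma> x k (\<sigma> (Suc i))"
    using perm_in1[OF perm i1(1)] perm_in1[OF perm i1(2)] perm_mem[OF perm i1(1), of k]
      perm_mem[OF perm i1(2), of k]
    by (auto simp: zpart_def)
qed (auto simp add: zpart_def)

lemma scal_ts: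
  assumes perm: "\<sigma> permutes {1..n}" and c: "c \<in> I" "c \<ge> 0" and I0: "0 \<in> I"
  shows "scal_ind n c (Aup n \<sigma> k) \<in> tuples_sigma n I \<sigma>"
proof (rule tuples_sigma_intro[OF perm])
  fix i assume i: "i \<in> {1..n}"
  show "scal_ind n c (Aup n \<sigma> k) (\<sigma> i) \<in> I"
    using i perm_in1[OF perm i] c I0 by (simp add: scal_ind_def)
next
  fix i assume i: "i \<in> {1..<n}"
  have i1: "i \<in> {1..n}" "Suc i \<in> {1..n}" using i by auto
  show "scal_ind n c (Aup n \<sigma> k) (\<sigma> i) \<le> scal_ind n c (Aup n \<sigma> k) (\<sigma> (Suc i))"
    using perm_in1[OF perm i1(1)] perm_in1[OF perm i1(2)] perm_mem[OF perm i1(1), of k]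
      perm_mem[OF perm i1(2), of k] c
    by (auto simp: scal_ind_def)
qed (auto simp add: scal_ind_def)

lemma step_cm:
  assumes cm: "comon_modular n I f" and perm: "\<sigma> permutes {1..n}" and x: "x \<in> tuples_sigma n I \<sigma>"
    and nn: "I \<subseteq> {0..}" and I0: "0 \<in> I" and k: "k \<in> {1..n}"
  shows "f (zpart n \<sigma> x k) - f (zpart n \<sigma> x (Suc k))
       = f (scal_ind n (x (\<sigma> k)) (Aup n \<sigma> k)) - f (scal_ind n (x (\<sigma> k)) (Aup n \<sigma> (Suc k)))"
proof -
  define c where "c = x (\<sigma> k)"
  have cI: "c \<in> I" using ts_val[OF x perm k] c_def by simp
  have c0: "c \<ge> 0" using cI nn by auto
  have cle: "\<And>i. i \<in> {1..n} \<Longrightarrow> k \<le> i \<Longrightarrow> c \<le> x (\<sigma> i)"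
    unfolding c_def using sorted_sigma[OF x] k by auto
  define u where "u = scal_ind n c (Aup n \<sigma> k)"
  define v where "v = zpart n \<sigma> x (Suc k)"
  have u: "u \<in> tuples_sigma n I \<sigma>" unfolding u_def by (rule scal_ts[OF perm cI c0 I0])
  have v: "v \<in> tuples_sigma n I \<sigma>" unfolding v_def by (rule zpart_ts[OF perm x nn I0])
  have com: "comonotonic n I u v" unfolding comonotonic_def using perm u v by blast
  have eq: "f u + f v = f (cmin n u v) + f (cmax n u v)"
    using cm com ts_tuples[OF u] ts_tuples[OF v] unfolding comon_modular_def by blast
  have mn: "cmin n u v = scal_ind n c (Aup n \<sigma> (Suc k))"
  proof (rule ext_sigma[OF perm])
    fix i assume i: "i \<in> {1..n}"
    show "cmin n u v (\<sigma> i) = scal_ind n c (Aup n \<sigma> (Suc k)) (\<sigma> i)"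
      using perm_in1[OF perm i] perm_mem[OF perm i, of k] perm_mem[OF perm i, of "Suc k"] c0 cle[OF i]
      by (auto simp: cmin_def u_def v_def scal_ind_def zpart_def)
  qed (auto simp: cmin_def scal_ind_def)
  have mx: "cmax n u v = zpart n \<sigma> x k"
  proof (rule ext_sigma[OF perm])
    fix i assume i: "i \<in> {1..n}"
    show "cmax n u v (\<sigma> i) = zpart n \<sigma> x k (\<sigma> i)"
      using perm_in1[OF perm i] perm_mem[OF perm i, of k] perm_mem[OF perm i, of "Suc k"] c0 cle[OF i]
      using c_def by (cases "i = k") (auto simp: cmax_def u_def v_def scal_ind_def zpart_def)
  qed (auto simp: cmax_def zpart_def)
  have "f (zpart n \<sigma> x k) - f v = f u - f (scal_ind n c (Aup n \<sigma> (Suc k)))"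
    using eq unfolding mn mx by linarith
  then show ?thesis unfolding u_def v_def c_def .
qed

lemma step_hm:
  assumes hm: "horiz_min_inv n I f" and perm: "\<sigma> permutes {1..n}" and x: "x \<in> tuples_sigma n I \<sigma>"
    and nn: "I \<subseteq> {0..}" and I0: "0 \<in> I" and k: "k \<in> {1..n}"
  shows "f (zpart n \<sigma> x k) - f (zpart n \<sigma> x (Suc k))
       = f (scal_ind n (x (\<sigma> k)) (Aup n \<sigma> k)) - f (scal_ind n (x (\<sigma> k)) (Aup n \<sigma> (Suc k)))"
proof -
  define c where "c = x (\<sigma> k)"
  have cI: "c \<in> I" using ts_val[OF x perm k] c_def by simp
  have c0: "c \<ge> 0" using cI nn by auto
  have cle: "\<And>i. i \<in> {1..n} \<Longrightarrow> k \<le> i \<Longrightarrow> c \<le> x (\<sigma> i)"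
    unfolding c_def using sorted_sigma[OF x] k by auto
  have x0: "\<And>i. i \<in> {1..n} \<Longrightarrow> 0 \<le> x (\<sigma> i)" using ts_val[OF x perm] nn by auto
  define y where "y = zpart n \<sigma> x k"
  define y' where "y' = zpart n \<sigma> x (Suc k)"
  have y: "y \<in> tuples n I" unfolding y_def by (rule ts_tuples[OF zpart_ts[OF perm x nn I0]])
  have y': "y' \<in> tuples n I" unfolding y'_def by (rule ts_tuples[OF zpart_ts[OF perm x nn I0]])
  have e1: "f y - f (cminc n y c) = f (cutc n c y) - f (cminc n (cutc n c y) c)"
    using hm y cI unfolding horiz_min_inv_def by blast
  have e2: "f y' - f (cminc n y' c) = f (cutc n c y') - f (cminc n (cutc n c y') c)"
    using hm y' cI unfolding horiz_min_inv_def by blast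
  have m1: "cminc n y c = scal_ind n c (Aup n \<sigma> k)"
  proof (rule ext_sigma[OF perm])
    fix i assume i: "i \<in> {1..n}"
    show "cminc n y c (\<sigma> i) = scal_ind n c (Aup n \<sigma> k) (\<sigma> i)"
      using perm_in1[OF perm i] perm_mem[OF perm i, of k] c0 cle[OF i]
      by (auto simp: cminc_def y_def scal_ind_def zpart_def)
  qed (auto simp: cminc_def scal_ind_def)
  have m2: "cminc n y' c = scal_ind n c (Aup n \<sigma> (Suc k))"
  proof (rule ext_sigma[OF perm])
    fix i assume i: "i \<in> {1..n}"
    show "cminc n y' c (\<sigma> i) = scal_ind n c (Aup n \<sigma> (Suc k)) (\<sigma> i)"
      using perm_in1[OF perm i] perm_mem[OF perm i, of "Suc k"] c0 cle[OF i]
      by (auto simp: cminc_def y'_def scal_ind_def zpart_def)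
  qed (auto simp: cminc_def scal_ind_def)
  have m3: "cutc n c y = cutc n c y'"
  proof (rule ext_sigma[OF perm])
    fix i assume i: "i \<in> {1..n}"
    show "cutc n c y (\<sigma> i) = cutc n c y' (\<sigma> i)"
      using perm_in1[OF perm i] perm_mem[OF perm i, of k] perm_mem[OF perm i, of "Suc k"] c0 cle[OF i]
      unfolding c_def
      by (cases "i = k") (auto simp: cutc_def y_def y'_def zpart_def)
  qed (auto simp: cutc_def)
  have "f y - f y' = f (scal_ind n c (Aup n \<sigma> k)) - f (scal_ind n c (Aup n \<sigma> (Suc k)))"
    using e1 e2 unfolding m1 m2 m3 by linarith
  then show ?thesis unfolding y_def y'_def c_def .
qed

lemma rep_from_step:
  fixes f :: "(nat \<Rightarrow> real) \<Rightarrow> real"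
  assumes perm: "\<sigma> permutes {1..n}" and x: "x \<in> tuples_sigma n I \<sigma>"
    and H: "\<And>k. k \<in> {1..n} \<Longrightarrow> f (zpart n \<sigma> x k) - f (zpart n \<sigma> x (Suc k))
       = f (scal_ind n (x (\<sigma> k)) (Aup n \<sigma> k)) - f (scal_ind n (x (\<sigma> k)) (Aup n \<sigma> (Suc k)))"
  shows "f x = f (scal_ind n 0 {}) +
          (\<Sum>i\<in>{1..n}. f (scal_ind n (x (\<sigma> i)) (Aup n \<sigma> i))
                       - f (scal_ind n (x (\<sigma> i)) (Aup n \<sigma> (Suc i))))"
proof -
  have A1: "Aup n \<sigma> 1 = {1..n}" unfolding Aup_def using permutes_image[OF perm] by simp
  have An: "Aup n \<sigma> (Suc n) = {}" unfolding Aup_def by simp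
  have z1: "zpart n \<sigma> x 1 = x"
    using ts_ext[OF x] unfolding zpart_def A1 by (auto simp: restrict_def)
  have zn: "zpart n \<sigma> x (Suc n) = scal_ind n 0 {}"
    unfolding zpart_def An scal_ind_def by simp
  define F where "F i = - f (zpart n \<sigma> x i)" for i
  have "(\<Sum>i\<in>{1..n}. f (scal_ind n (x (\<sigma> i)) (Aup n \<sigma> i))
                       - f (scal_ind n (x (\<sigma> i)) (Aup n \<sigma> (Suc i))))
      = (\<Sum>i=1..n. F (Suc i) - F i)"
    using H by (auto simp: F_def intro!: sum.cong)
  also have "\<dots> = F (Suc n) - F 1" by (rule sum_Suc_diff) simp
  finally show ?thesis unfolding F_def z1 zn by simp
qed

lemma minmax_T:
  fixes a b :: real and T :: "real \<Rightarrow> real"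
  shows "T (min a b) + T (max a b) = T a + T b"
  by (cases "a \<le> b") (simp_all add: min_def max_def)

lemma rep_cm:
  fixes f g :: "(nat \<Rightarrow> real) \<Rightarrow> real"
  assumes rep: "rep_by n I f g"
  shows "comon_modular n I f"
  unfolding comon_modular_def
proof (intro ballI impI)
  fix x y assume "x \<in> tuples n I" "y \<in> tuples n I" "comonotonic n I x y"
  then obtain \<sigma> where perm: "\<sigma> permutes {1..n}" and x: "x \<in> tuples_sigma n I \<sigma>"
    and y: "y \<in> tuples_sigma n I \<sigma>" unfolding comonotonic_def by blast
  define T where "T i c = g (scal_ind n c (Aup n \<sigma> i)) - g (scal_ind n c (Aup n \<sigma> (Suc i)))" for i c
  have ev1: "\<And>i. i \<in> {1..n} \<Longrightarrow> cmin n x y (\<sigma> i) = min (x (\<sigma> i)) (y (\<sigma> i))"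
    using perm_in1[OF perm] by (simp add: cmin_def)
  have ev2: "\<And>i. i \<in> {1..n} \<Longrightarrow> cmax n x y (\<sigma> i) = max (x (\<sigma> i)) (y (\<sigma> i))"
    using perm_in1[OF perm] by (simp add: cmax_def)
  have m: "cmin n x y \<in> tuples_sigma n I \<sigma>"
  proof (rule tuples_sigma_intro[OF perm])
    fix i assume i: "i \<in> {1..n}"
    show "cmin n x y (\<sigma> i) \<in> I" using ev1[OF i] ts_val[OF x perm i] ts_val[OF y perm i]
      by (simp add: min_def)
  next
    fix i assume i: "i \<in> {1..<n}"
    then have "i \<in> {1..n}" "Suc i \<in> {1..n}" by auto
    then show "cmin n x y (\<sigma> i) \<le> cmin n x y (\<sigma> (Suc i))"
      using ev1 ts_mono[OF x i] ts_mono[OF y i] by (auto simp add: min_def)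
  qed (auto simp add: cmin_def)
  have M: "cmax n x y \<in> tuples_sigma n I \<sigma>"
  proof (rule tuples_sigma_intro[OF perm])
    fix i assume i: "i \<in> {1..n}"
    show "cmax n x y (\<sigma> i) \<in> I" using ev2[OF i] ts_val[OF x perm i] ts_val[OF y perm i]
      by (simp add: max_def)
  next
    fix i assume i: "i \<in> {1..<n}"
    then have "i \<in> {1..n}" "Suc i \<in> {1..n}" by auto
    then show "cmax n x y (\<sigma> i) \<le> cmax n x y (\<sigma> (Suc i))"
      using ev2 ts_mono[OF x i] ts_mono[OF y i] by (auto simp add: max_def)
  qed (auto simp add: cmax_def)
  have R: "\<And>z. z \<in> tuples_sigma n I \<sigma> \<Longrightarrow> f z = g (scal_ind n 0 {}) + (\<Sum>i\<in>{1..n}. T i (z (\<sigma> i)))"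
    using rep perm unfolding rep_by_def T_def by blast
  have "(\<Sum>i\<in>{1..n}. T i (cmin n x y (\<sigma> i))) + (\<Sum>i\<in>{1..n}. T i (cmax n x y (\<sigma> i)))
      = (\<Sum>i\<in>{1..n}. T i (x (\<sigma> i))) + (\<Sum>i\<in>{1..n}. T i (y (\<sigma> i)))"
    unfolding sum.distrib[symmetric] by (rule sum.cong) (simp_all add: ev1 ev2 minmax_T)
  then show "f x + f y = f (cmin n x y) + f (cmax n x y)"
    using R[OF x] R[OF y] R[OF m] R[OF M] by linarith
qed

lemma rep_hm:
  fixes f g :: "(nat \<Rightarrow> real) \<Rightarrow> real"
  assumes rep: "rep_by n I f g" and nn: "I \<subseteq> {0..}" and I0: "0 \<in> I"
  shows "horiz_min_inv n I f"
  unfolding horiz_min_inv_def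
proof (intro ballI)
  fix x c assume xt: "x \<in> tuples n I" and cI: "c \<in> I"
  have c0: "c \<ge> 0" using cI nn by auto
  obtain \<sigma> where perm: "\<sigma> permutes {1..n}" and x: "x \<in> tuples_sigma n I \<sigma>"
    using sort_exists[OF xt] by blast
  have x0: "\<And>i. i \<in> {1..n} \<Longrightarrow> 0 \<le> x (\<sigma> i)" using ts_val[OF x perm] nn by auto
  define T where "T i c = g (scal_ind n c (Aup n \<sigma> i)) - g (scal_ind n c (Aup n \<sigma> (Suc i)))" for i c
  define cut where "cut a = (if a \<le> c then 0 else a)" for a :: real
  have ev1: "\<And>i. i \<in> {1..n} \<Longrightarrow> cminc n x c (\<sigma> i) = min (x (\<sigma> i)) c"
    using perm_in1[OF perm] by (simp add: cminc_def)
  have ev2: "\<And>i. i \<in> {1..n} \<Longrightarrow> cutc n c x (\<sigma> i) = cut (x (\<sigma> i))"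
    using perm_in1[OF perm] by (simp add: cutc_def cut_def)
  have ev3: "\<And>i. i \<in> {1..n} \<Longrightarrow> cminc n (cutc n c x) c (\<sigma> i) = min (cut (x (\<sigma> i))) c"
    using perm_in1[OF perm] ev2 by (simp add: cminc_def)
  have cutmono: "\<And>a b. 0 \<le> a \<Longrightarrow> a \<le> b \<Longrightarrow> cut a \<le> cut b" by (auto simp: cut_def)
  have t1: "cminc n x c \<in> tuples_sigma n I \<sigma>"
  proof (rule tuples_sigma_intro[OF perm])
    fix i assume i: "i \<in> {1..n}"
    show "cminc n x c (\<sigma> i) \<in> I" using ev1[OF i] ts_val[OF x perm i] cI
      by (simp add: min_def)
  next
    fix i assume i: "i \<in> {1..<n}"
    then have "i \<in> {1..n}" "Suc i \<in> {1..n}" by auto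
    then show "cminc n x c (\<sigma> i) \<le> cminc n x c (\<sigma> (Suc i))"
      using ev1 ts_mono[OF x i] by (auto simp add: min_def)
  qed (auto simp add: cminc_def)
  have t2: "cutc n c x \<in> tuples_sigma n I \<sigma>"
  proof (rule tuples_sigma_intro[OF perm])
    fix i assume i: "i \<in> {1..n}"
    show "cutc n c x (\<sigma> i) \<in> I" using ev2[OF i] ts_val[OF x perm i] I0
      by (simp add: cut_def)
  next
    fix i assume i: "i \<in> {1..<n}"
    then have "i \<in> {1..n}" "Suc i \<in> {1..n}" by auto
    then show "cutc n c x (\<sigma> i) \<le> cutc n c x (\<sigma> (Suc i))"
      using ev2 ts_mono[OF x i] x0 cutmono by simp
  qed (auto simp add: cutc_def)
  have t3: "cminc n (cutc n c x) c \<in> tuples_sigma n I \<sigma>"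
  proof (rule tuples_sigma_intro[OF perm])
    fix i assume i: "i \<in> {1..n}"
    show "cminc n (cutc n c x) c (\<sigma> i) \<in> I" using ev3[OF i] ts_val[OF x perm i] cI I0
      by (simp add: min_def cut_def)
  next
    fix i assume i: "i \<in> {1..<n}"
    then have "i \<in> {1..n}" "Suc i \<in> {1..n}" by auto
    moreover have "cut (x (\<sigma> i)) \<le> cut (x (\<sigma> (Suc i)))"
      using cutmono[OF x0 ts_mono[OF x i]] i by auto
    ultimately show "cminc n (cutc n c x) c (\<sigma> i) \<le> cminc n (cutc n c x) c (\<sigma> (Suc i))"
      using ev3 by (auto simp add: min_def)
  qed (auto simp add: cminc_def)
  have R: "\<And>z. z \<in> tuples_sigma n I \<sigma> \<Longrightarrow> f z = g (scal_ind n 0 {}) + (\<Sum>i\<in>{1..n}. T i (z (\<sigma> i)))"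
    using rep perm unfolding rep_by_def T_def by blast
  have "(\<Sum>i\<in>{1..n}. T i (x (\<sigma> i))) + (\<Sum>i\<in>{1..n}. T i (cminc n (cutc n c x) c (\<sigma> i)))
      = (\<Sum>i\<in>{1..n}. T i (cminc n x c (\<sigma> i))) + (\<Sum>i\<in>{1..n}. T i (cutc n c x (\<sigma> i)))"
    unfolding sum.distrib[symmetric]
  proof (rule sum.cong)
    fix i assume i: "i \<in> {1..n}"
    show "T i (x (\<sigma> i)) + T i (cminc n (cutc n c x) c (\<sigma> i))
        = T i (cminc n x c (\<sigma> i)) + T i (cutc n c x (\<sigma> i))"
      using x0[OF i] c0 by (simp add: ev1[OF i] ev2[OF i] ev3[OF i] cut_def min_def)
  qed simp
  then show "f x - f (cminc n x c) = f (cutc n c x) - f (cminc n (cutc n c x) c)"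
    using R[OF x] R[OF t1] R[OF t2] R[OF t3] by linarith
qed

theorem theorem9:
  fixes n :: nat and I :: "real set" and f :: "(nat \<Rightarrow> real) \<Rightarrow> real"
  assumes "is_interval I" and "I \<subseteq> {0..}" and "0 \<in> I"
  shows "(comon_modular n I f \<longleftrightarrow> horiz_min_inv n I f)
       \<and> (horiz_min_inv n I f \<longleftrightarrow> (\<exists>g. rep_by n I f g))
       \<and> (comon_modular n I f \<longrightarrow> rep_by n I f f)"
proof -
  have A: "rep_by n I f f" if cm: "comon_modular n I f"
    unfolding rep_by_def
    using rep_from_step[OF _ _ step_cm[OF cm _ _ assms(2,3)]] by blast
  have B: "rep_by n I f f" if hm: "horiz_min_inv n I f"
    unfolding rep_by_def
    using rep_from_step[OF _ _ step_hm[OF hm _ _ assms(2,3)]] by blast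
  have C: "comon_modular n I f" if "rep_by n I f g" for g using rep_cm that by blast
  have D: "horiz_min_inv n I f" if "rep_by n I f g" for g using rep_hm that assms(2,3) by blast
  show ?thesis using A B C D by blast
qed

end
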